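(* Let $M$ be a finite abelian group of order $m$, $J$ a Jacobi function on $M$, and $i\colon\hat{M}\to\hat{M}$ a bijection with $i(x)=x\,i(x^{-1})$ for all $x$, such that $J(\alpha,\beta)=\frac{1}{m}\sum_{x\in\hat{M}}\alpha(i(x))\beta(i(x)x^{-1})$ for all $\alpha,\beta\in M$. Define $x\oplus y=x\,i(x/y)^{-1}$ for $x,y\in\hat{M}$. Then $\oplus$ is associative.
   Context: $\hat{M}$ is the Pontryagin dual of $M$, written multiplicatively; for $\alpha\in M$, $x\in\hat{M}$, $\alpha(x)$ is the value of the character $x$ at $\alpha$. $\delta(\alpha)=1$ if $\alpha$ is the identity of $M$ and $0$ otherwise. A Jacobi function on $M$ is a function $J\colon M\times M\to\mathbf{C}$ satisfying: (A) $J(\alpha,\beta)=J(\beta,\alpha)$; (B) with $J^*(\alpha,\beta)=-\delta(\alpha)-\delta(\beta)+J(\alpha,\beta)$, $J^*(\alpha,\beta)J^*(\alpha\beta,\gamma)=J^*(\alpha,\beta\gamma)J^*(\beta,\gamma)$; (C) $\sum_{\beta\in M}J(\alpha_1\beta,\alpha_2\beta^{-1})J(\alpha_3\beta,\alpha_4\beta^{-1})=J(\alpha_1\alpha_4,\alpha_2\alpha_3)$; all for all elements of $M$. *)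

theory Defs
  imports Complex_Main
begin

text \<open>The finite abelian group M is a type of class ab_group_add (written additively,
  so the identity is 0 and the group law is +).\<close>

definition dual :: "('a::ab_group_add \<Rightarrow> complex) set" where
  "dual = {\<chi>. \<chi> 0 = 1 \<and> (\<forall>a b. \<chi> (a + b) = \<chi> a * \<chi> b)}"

definition char_mult :: "('a \<Rightarrow> complex) \<Rightarrow> ('a \<Rightarrow> complex) \<Rightarrow> ('a \<Rightarrow> complex)" where
  "char_mult x y = (\<lambda>a. x a * y a)"

definition char_inv :: "('a \<Rightarrow> complex) \<Rightarrow> ('a \<Rightarrow> complex)" where
  "char_inv x = (\<lambda>a. inverse (x a))"

definition char_div :: "('a \<Rightarrow> complex) \<Rightarrow> ('a \<Rightarrow> complex) \<Rightarrow> ('a \<Rightarrow> complex)" where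
  "char_div x y = (\<lambda>a. x a / y a)"

definition kdelta :: "'a::zero \<Rightarrow> complex" where
  "kdelta a = (if a = 0 then 1 else 0)"

definition Jstar :: "('a::zero \<Rightarrow> 'a \<Rightarrow> complex) \<Rightarrow> 'a \<Rightarrow> 'a \<Rightarrow> complex" where
  "Jstar J a b = - kdelta a - kdelta b + J a b"

definition jacobi_function :: "('a::{ab_group_add,finite} \<Rightarrow> 'a \<Rightarrow> complex) \<Rightarrow> bool" where
  "jacobi_function J \<longleftrightarrow>
     (\<forall>a b. J a b = J b a) \<and>
     (\<forall>a b c. Jstar J a b * Jstar J (a + b) c = Jstar J a (b + c) * Jstar J b c) \<and>
     (\<forall>a1 a2 a3 a4. (\<Sum>b\<in>UNIV. J (a1 + b) (a2 - b) * J (a3 + b) (a4 - b)) = J (a1 + a4) (a2 + a3))"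

definition oplus_char :: "(('a \<Rightarrow> complex) \<Rightarrow> ('a \<Rightarrow> complex)) \<Rightarrow> ('a \<Rightarrow> complex) \<Rightarrow> ('a \<Rightarrow> complex) \<Rightarrow> ('a \<Rightarrow> complex)" where
  "oplus_char i x y = char_mult x (char_inv (i (char_div x y)))"

end

theory Submission
  imports Defs "HOL-Library.FuncSet"
begin

lemma dual_0: "x \<in> dual \<Longrightarrow> x 0 = 1" by (simp add: dual_def)
lemma dual_add: "x \<in> dual \<Longrightarrow> x (a + b) = x a * x b" by (simp add: dual_def)
lemma dual_neg: "x \<in> dual \<Longrightarrow> x (- a) * x a = 1"
  by (metis dual_0 dual_add left_minus)
lemma dual_nz: "x \<in> dual \<Longrightarrow> x a \<noteq> 0"
  using dual_neg[of x a] by auto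
lemma dual_neg': "x \<in> dual \<Longrightarrow> x (- a) = inverse (x a)"
  using dual_neg[of x a] dual_nz[of x a] by (simp add: field_simps)
lemma dual_diff: "x \<in> dual \<Longrightarrow> x (a - b) = x a / x b"
  using dual_add[of x a "-b"] dual_neg'[of x b] by (simp add: divide_inverse)

lemma mult_dual: "x \<in> dual \<Longrightarrow> y \<in> dual \<Longrightarrow> char_mult x y \<in> dual"
  by (simp add: dual_def char_mult_def)
lemma inv_dual: "x \<in> dual \<Longrightarrow> char_inv x \<in> dual"
  by (simp add: dual_def char_inv_def)
lemma div_dual: "x \<in> dual \<Longrightarrow> y \<in> dual \<Longrightarrow> char_div x y \<in> dual"
  by (simp add: dual_def char_div_def)

lemma orth:
  fixes x :: "'a::{ab_group_add,finite} \<Rightarrow> complex"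
  assumes "x \<in> dual"
  shows "(\<Sum>a\<in>UNIV. x a) = (if (\<forall>a. x a = 1) then of_nat (card (UNIV :: 'a set)) else 0)"
proof (cases "\<forall>a. x a = 1")
  case True thus ?thesis by simp
next
  case False
  then obtain b where b: "x b \<noteq> 1" by auto
  have "(\<Sum>a\<in>UNIV. x (a + b)) = (\<Sum>a\<in>UNIV. x a)"
    by (rule sum.reindex_bij_witness[of _ "\<lambda>a. a - b" "\<lambda>a. a + b"]) auto
  hence "x b * (\<Sum>a\<in>UNIV. x a) = (\<Sum>a\<in>UNIV. x a)"
    using assms by (simp add: dual_add sum_distrib_left mult.commute)
  hence "(\<Sum>a\<in>UNIV. x a) = 0" using b
    by (metis mult_cancel_right2)
  thus ?thesis using False by simp
qed

lemma finite_dual: "finite (dual :: ('a::{ab_group_add,finite} \<Rightarrow> complex) set)"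
proof -
  define m where "m = card (UNIV :: 'a set)"
  define R where "R = (\<Union>d\<in>{1..m}. {z::complex. z ^ d = 1})"
  have fR: "finite R" unfolding R_def by (auto intro: finite_roots_unity)
  have "x a \<in> R" if x: "x \<in> dual" for x :: "'a \<Rightarrow> complex" and a
  proof -
    define f where "f k = ((+) a ^^ k) 0" for k
    have fx: "x (f k) = x a ^ k" for k
      by (induction k) (simp_all add: f_def dual_0[OF x] dual_add[OF x])
    have "card (f ` {0..m}) \<le> card (UNIV :: 'a set)" by (rule card_mono) auto
    hence "card (f ` {0..m}) < card {0..m}" by (simp add: m_def)
    hence "\<not> inj_on f {0..m}" by (rule pigeonhole)
    then obtain k l where kl: "k \<in> {0..m}" "l \<in> {0..m}" "k \<noteq> l" "f k = f l"
      unfolding inj_on_def by auto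
    then obtain k l where kl: "k \<le> m" "l \<le> m" "k < l" "f k = f l"
      by (metis atLeastAtMost_iff linorder_neqE_nat)
    have "x a ^ k * x a ^ (l - k) = x a ^ k * 1"
      using fx[of k] fx[of l] kl by (simp add: power_add[symmetric])
    hence "x a ^ (l - k) = 1" using dual_nz[OF x] by simp
    thus ?thesis unfolding R_def using kl by force
  qed
  hence "(dual :: ('a \<Rightarrow> complex) set) \<subseteq> PiE UNIV (\<lambda>_. R)" by auto
  moreover have "finite (PiE (UNIV::'a set) (\<lambda>_. R))" by (rule finite_PiE) (auto simp: fR)
  ultimately show ?thesis using finite_subset by blast
qed

lemma kd_sum1: "(\<Sum>b\<in>UNIV. kdelta (a + b) * f b) = f (- (a::'a::{ab_group_add,finite}))"
proof -
  have "(\<Sum>b\<in>UNIV. kdelta (a + b) * f b) = (\<Sum>b\<in>UNIV. if b = - a then f b else 0)"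
  proof (rule sum.cong)
    fix b show "kdelta (a + b) * f b = (if b = - a then f b else 0)"
      unfolding kdelta_def by (metis add.commute add_eq_0_iff mult_cancel_right1 mult_eq_0_iff)
  qed simp
  thus ?thesis by simp
qed

lemma kd_sum0: "(\<Sum>b\<in>UNIV. kdelta b * f b) = f (0::'a::{ab_group_add,finite})"
proof -
  have "(\<Sum>b\<in>UNIV. kdelta b * f b) = (\<Sum>b\<in>UNIV. if b = 0 then f b else 0)"
    by (rule sum.cong) (auto simp: kdelta_def)
  thus ?thesis by simp
qed

lemma orth3:
  fixes x :: "'a::{ab_group_add,finite} \<Rightarrow> complex"
  assumes "x \<in> dual" "y \<in> dual" "z \<in> dual"
  shows "(\<Sum>a\<in>UNIV. x a * y a * z a) = (if (\<forall>a. x a * y a * z a = 1) then of_nat (card (UNIV :: 'a set)) else 0)"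
  using orth[OF mult_dual[OF mult_dual[OF assms(1,2)] assms(3)]] by (simp add: char_mult_def)

lemma orth2:
  fixes x :: "'a::{ab_group_add,finite} \<Rightarrow> complex"
  assumes "x \<in> dual" "y \<in> dual"
  shows "(\<Sum>a\<in>UNIV. x a * y a) = (if (\<forall>a. x a * y a = 1) then of_nat (card (UNIV :: 'a set)) else 0)"
  using orth[OF mult_dual[OF assms(1,2)]] by (simp add: char_mult_def)

lemma t1: "(\<Sum>a\<in>U. f a) * (\<Sum>b\<in>U. g b) * (\<Sum>c\<in>U. h c) = (\<Sum>a\<in>U. \<Sum>b\<in>U. \<Sum>c\<in>U. f a * g b * (h c::'z::comm_semiring_1))"
proof -
  have "(\<Sum>a\<in>U. f a) * (\<Sum>b\<in>U. g b) * (\<Sum>c\<in>U. h c) = (\<Sum>a\<in>U. (f a * (\<Sum>b\<in>U. g b)) * (\<Sum>c\<in>U. h c))"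
    by (simp only: sum_distrib_right)
  also have "\<dots> = (\<Sum>a\<in>U. \<Sum>b\<in>U. \<Sum>c\<in>U. f a * g b * (h c::'z::comm_semiring_1))"
    by (rule sum.cong, rule refl, simp only: sum_distrib_left sum_distrib_right, rule sum.swap)
  finally show ?thesis .
qed

lemma swap4: "(\<Sum>y\<in>Y. \<Sum>a\<in>U. \<Sum>b\<in>V. \<Sum>c\<in>W. F y a b c) = (\<Sum>a\<in>U. \<Sum>b\<in>V. \<Sum>c\<in>W. \<Sum>y\<in>Y. (F y a b c :: 'z::comm_monoid_add))"
  apply (rule trans[OF sum.swap])
  apply (rule sum.cong[OF refl])
  apply (rule trans[OF sum.swap])
  apply (rule sum.cong[OF refl])
  apply (rule trans[OF sum.swap])
  by (rule refl)

lemma sum5: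
  "(\<Sum>a\<in>U. \<Sum>b\<in>U. \<Sum>c\<in>U. \<Sum>x\<in>X. \<Sum>y\<in>Y. (f x y a * g x y b * h x y c :: 'z::comm_semiring_1)) =
   (\<Sum>x\<in>X. \<Sum>y\<in>Y. (\<Sum>a\<in>U. f x y a) * (\<Sum>b\<in>U. g x y b) * (\<Sum>c\<in>U. h x y c))"
proof -
  have "(\<Sum>x\<in>X. \<Sum>y\<in>Y. (\<Sum>a\<in>U. f x y a) * (\<Sum>b\<in>U. g x y b) * (\<Sum>c\<in>U. h x y c))
     = (\<Sum>x\<in>X. \<Sum>y\<in>Y. \<Sum>a\<in>U. \<Sum>b\<in>U. \<Sum>c\<in>U. f x y a * g x y b * h x y c)"
    by (simp only: t1)
  also have "\<dots> = (\<Sum>x\<in>X. \<Sum>a\<in>U. \<Sum>b\<in>U. \<Sum>c\<in>U. \<Sum>y\<in>Y. f x y a * g x y b * h x y c)"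
    by (rule sum.cong[OF refl], rule swap4)
  also have "\<dots> = (\<Sum>a\<in>U. \<Sum>b\<in>U. \<Sum>c\<in>U. \<Sum>x\<in>X. \<Sum>y\<in>Y. f x y a * g x y b * h x y c)"
    by (rule swap4)
  finally show ?thesis by simp
qed

definition PP :: "(('a::{ab_group_add,finite} \<Rightarrow> complex) \<Rightarrow> ('a \<Rightarrow> complex)) \<Rightarrow> 'a \<Rightarrow> 'a \<Rightarrow> complex" where
  "PP i a b = (\<Sum>x\<in>dual. i x a * char_mult (i x) (char_inv x) b)"

definition DD :: "'a::{ab_group_add,finite} \<Rightarrow> complex" where
  "DD a = (\<Sum>x\<in>dual. x a)"

lemma kd_shift: "kdelta (a::'a::ab_group_add) * f (a + b) = kdelta a * f b" "kdelta b * f (a + b) = kdelta b * f a"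
  by (auto simp: kdelta_def)

lemma kd_prod: "kdelta (a::'a::ab_group_add) * kdelta (a + b) = kdelta a * kdelta b"
  "kdelta b * kdelta (a + b) = kdelta a * kdelta b"
  by (auto simp: kdelta_def)

lemma PD:
  assumes idual: "\<forall>x\<in>dual. i x \<in> dual"
  shows "kdelta (a + b) * PP i a b = kdelta (a + b) * DD a"
proof (cases "a + b = 0")
  case True
  hence b: "b = - a" by (simp add: add_eq_0_iff)
  have "PP i a b = DD a" unfolding PP_def DD_def b
  proof (rule sum.cong[OF refl])
    fix x :: "'a \<Rightarrow> complex" assume x: "x \<in> dual"
    have ix: "i x \<in> dual" using idual x by auto
    show "i x a * char_mult (i x) (char_inv x) (- a) = x a"
      using dual_neg'[OF ix, of a] dual_neg'[OF x, of a] dual_nz[OF ix, of a] dual_nz[OF x, of a]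
      by (simp add: char_mult_def char_inv_def)
  qed
  thus ?thesis by simp
qed (simp add: kdelta_def)

lemma Dsum:
  fixes p :: "'a::{ab_group_add,finite} \<Rightarrow> complex"
  assumes p: "p \<in> dual" and q: "q \<in> dual"
  shows "(\<Sum>a\<in>UNIV. DD a * p a * q (- a)) = of_nat (card (UNIV :: 'a set))"
proof -
  let ?m = "of_nat (card (UNIV :: 'a set)) :: complex"
  have "(\<Sum>a\<in>UNIV. DD a * p a * q (- a)) = (\<Sum>a\<in>UNIV. \<Sum>x\<in>dual. x a * p a * char_inv q a)"
    unfolding DD_def using dual_neg'[OF q] by (simp add: sum_distrib_right char_inv_def)
  also have "\<dots> = (\<Sum>x\<in>dual. \<Sum>a\<in>UNIV. x a * p a * char_inv q a)" by (rule sum.swap)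
  also have "\<dots> = (\<Sum>x\<in>dual. if x = char_div q p then ?m else 0)"
  proof (rule sum.cong[OF refl])
    fix x :: "'a \<Rightarrow> complex" assume x: "x \<in> dual"
    have "(\<forall>a. x a * p a * char_inv q a = 1) \<longleftrightarrow> x = char_div q p"
      unfolding fun_eq_iff char_inv_def char_div_def
      using dual_nz[OF p] dual_nz[OF q] by (auto simp: field_simps)
    thus "(\<Sum>a\<in>UNIV. x a * p a * char_inv q a) = (if x = char_div q p then ?m else 0)"
      using orth3[OF x p inv_dual[OF q]] by simp
  qed
  also have "\<dots> = ?m" by (subst sum.delta[OF finite_dual]) (simp add: div_dual[OF q p])
  finally show ?thesis .
qed

lemma pw:
  fixes J :: "'a::{ab_group_add,finite} \<Rightarrow> 'a \<Rightarrow> complex"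
  assumes idual: "\<forall>x\<in>dual. i x \<in> dual"
    and Jdef: "\<forall>a b. J a b = (1 / of_nat (card (UNIV :: 'a set))) *
            (\<Sum>x\<in>dual. i x a * char_mult (i x) (char_inv x) b)"
    and JB: "\<forall>a b c. Jstar J a b * Jstar J (a + b) c = Jstar J a (b + c) * Jstar J b c"
  defines "m \<equiv> of_nat (card (UNIV :: 'a set)) :: complex"
  shows "PP i a b * PP i (a+b) c - PP i a (b+c) * PP i b c +
     (- m*(kdelta(a+b)*DD a) + m*m*(kdelta a*kdelta b) + m*(kdelta(b+c)*DD b) - m*m*(kdelta b*kdelta c)) = 0"
proof -
  have m0: "m \<noteq> 0" unfolding m_def by simp
  define K where "K x y = PP i x y - m*kdelta x - m*kdelta y" for x y
  have Js: "Jstar J x y = K x y / m" for x y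
    unfolding Jstar_def K_def PP_def using Jdef m0 by (simp add: m_def field_simps)
  have KK: "K a b * K (a+b) c = K a (b+c) * K b c"
    using JB[rule_format, of a b c] m0 unfolding Js by (simp add: field_simps)
  have s1: "kdelta a * PP i (a+b) c = kdelta a * PP i b c" by (simp add: kdelta_def)
  have s2: "kdelta b * PP i (a+b) c = kdelta b * PP i a c" by (simp add: kdelta_def)
  have s3: "kdelta b * PP i a (b+c) = kdelta b * PP i a c" by (simp add: kdelta_def)
  have s4: "kdelta c * PP i a (b+c) = kdelta c * PP i a b" by (simp add: kdelta_def)
  have s5: "kdelta (a+b) * PP i a b = kdelta (a+b) * DD a" by (rule PD[OF idual])
  have s6: "kdelta (b+c) * PP i b c = kdelta (b+c) * DD b" by (rule PD[OF idual])
  have p1: "kdelta a * kdelta (a+b) = kdelta a * kdelta b" by (simp add: kdelta_def)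
  have p2: "kdelta b * kdelta (a+b) = kdelta a * kdelta b" by (simp add: kdelta_def)
  have p3: "kdelta c * kdelta (b+c) = kdelta b * kdelta c" by (simp add: kdelta_def)
  have p4: "kdelta b * kdelta (b+c) = kdelta b * kdelta c" by (simp add: kdelta_def)
  have eL: "K a b * K (a+b) c = PP i a b * PP i (a+b) c - m*(kdelta(a+b)*PP i a b) - m*(kdelta c * PP i a b)
     - m*(kdelta a * PP i (a+b) c) + m*m*(kdelta a * kdelta(a+b)) + m*m*(kdelta a*kdelta c)
     - m*(kdelta b * PP i (a+b) c) + m*m*(kdelta b*kdelta(a+b)) + m*m*(kdelta b*kdelta c)"
    unfolding K_def by (simp add: algebra_simps)
  have eR: "K a (b+c) * K b c = PP i a (b+c) * PP i b c - m*(kdelta b * PP i a (b+c)) - m*(kdelta c*PP i a (b+c))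
     - m*(kdelta a*PP i b c) + m*m*(kdelta a*kdelta b) + m*m*(kdelta a*kdelta c)
     - m*(kdelta(b+c)*PP i b c) + m*m*(kdelta b*kdelta(b+c)) + m*m*(kdelta c * kdelta(b+c))"
    unfolding K_def by (simp add: algebra_simps)
  have "PP i a b * PP i (a+b) c - PP i a (b+c) * PP i b c +
     (- m*(kdelta(a+b)*DD a) + m*m*(kdelta a*kdelta b) + m*(kdelta(b+c)*DD b) - m*m*(kdelta b*kdelta c))
    = K a b * K (a+b) c - K a (b+c) * K b c"
    unfolding eL eR s1 s2 s3 s4 s5 s6 p1 p2 p3 p4 by (simp add: algebra_simps)
  thus ?thesis using KK by simp
qed

lemma prod_ifs: "(if c1 then m else 0) * (if c2 then m else 0) * (if c3 then m else 0) =
   (m::complex)^3 * (if c1 \<and> c2 \<and> c3 then 1 else 0)"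
  by (simp add: power3_eq_cube)

lemma sumprod_w: "(\<Sum>x\<in>X. f x) * (\<Sum>y\<in>Y. g y) * (w::complex) = (\<Sum>x\<in>X. \<Sum>y\<in>Y. f x * g y * w)"
proof -
  have "(\<Sum>x\<in>X. f x) * (\<Sum>y\<in>Y. g y) * w = (\<Sum>x\<in>X. f x * (\<Sum>y\<in>Y. g y) * w)"
    by (simp only: sum_distrib_right)
  also have "\<dots> = (\<Sum>x\<in>X. \<Sum>y\<in>Y. f x * g y * w)"
    by (rule sum.cong[OF refl]) (simp only: sum_distrib_left sum_distrib_right)
  finally show ?thesis .
qed

lemma PhiL:
  fixes p :: "'a::{ab_group_add,finite} \<Rightarrow> complex"
  assumes idual: "\<forall>x\<in>dual. i x \<in> dual" and p: "p \<in> dual" and q: "q \<in> dual" and r: "r \<in> dual"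
  shows "(\<Sum>a\<in>UNIV. \<Sum>b\<in>UNIV. \<Sum>c\<in>UNIV. PP i a b * PP i (a+b) c * p a * q b * r c) =
    (of_nat (card (UNIV :: 'a set)))^3 * (\<Sum>x\<in>dual. \<Sum>y\<in>dual. if (\<forall>a. i x a * i y a * p a = 1) \<and>
        (\<forall>a. char_mult (i x) (char_inv x) a * i y a * q a = 1) \<and>
        (\<forall>a. char_mult (i y) (char_inv y) a * r a = 1) then 1 else 0)"
proof -
  let ?m = "of_nat (card (UNIV :: 'a set)) :: complex"
  let ?B = "\<lambda>x. char_mult (i x) (char_inv x)"
  have Bd: "?B x \<in> dual" if "x \<in> dual" for x using that idual by (simp add: mult_dual inv_dual)
  have "(\<Sum>a\<in>UNIV. \<Sum>b\<in>UNIV. \<Sum>c\<in>UNIV. PP i a b * PP i (a+b) c * p a * q b * r c) =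
     (\<Sum>a\<in>UNIV. \<Sum>b\<in>UNIV. \<Sum>c\<in>UNIV. \<Sum>x\<in>dual. \<Sum>y\<in>dual.
        (i x a * i y a * p a) * (?B x b * i y b * q b) * (?B y c * r c))"
  proof (intro sum.cong refl)
    fix a b c
    have "PP i a b * PP i (a+b) c * p a * q b * r c =
       (\<Sum>x\<in>dual. \<Sum>y\<in>dual. (i x a * ?B x b) * (i y (a+b) * ?B y c) * (p a * q b * r c))"
    proof -
      have "PP i a b * PP i (a+b) c * p a * q b * r c = PP i a b * PP i (a+b) c * (p a * q b * r c)"
        by (simp only: mult.assoc)
      also have "\<dots> = (\<Sum>x\<in>dual. \<Sum>y\<in>dual. (i x a * ?B x b) * (i y (a+b) * ?B y c) * (p a * q b * r c))"
        unfolding PP_def by (rule sumprod_w)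
      finally show ?thesis .
    qed
    also have "\<dots> = (\<Sum>x\<in>dual. \<Sum>y\<in>dual. (i x a * i y a * p a) * (?B x b * i y b * q b) * (?B y c * r c))"
    proof (intro sum.cong refl)
      fix x y :: "'a \<Rightarrow> complex" assume "y \<in> dual"
      hence "i y \<in> dual" using idual by auto
      thus "(i x a * ?B x b) * (i y (a+b) * ?B y c) * (p a * q b * r c) =
        (i x a * i y a * p a) * (?B x b * i y b * q b) * (?B y c * r c)"
        by (simp add: dual_add mult_ac)
    qed
    finally show "PP i a b * PP i (a+b) c * p a * q b * r c =
       (\<Sum>x\<in>dual. \<Sum>y\<in>dual. (i x a * i y a * p a) * (?B x b * i y b * q b) * (?B y c * r c))" .
  qed
  also have "\<dots> = (\<Sum>x\<in>dual. \<Sum>y\<in>dual. (\<Sum>a\<in>UNIV. i x a * i y a * p a) * (\<Sum>b\<in>UNIV. ?B x b * i y b * q b)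
       * (\<Sum>c\<in>UNIV. ?B y c * r c))"
    by (rule sum5)
  also have "\<dots> = (\<Sum>x\<in>dual. \<Sum>y\<in>dual. ?m^3 * (if (\<forall>a. i x a * i y a * p a = 1) \<and>
        (\<forall>a. ?B x a * i y a * q a = 1) \<and> (\<forall>a. ?B y a * r a = 1) then 1 else 0))"
  proof (intro sum.cong refl)
    fix x y :: "'a \<Rightarrow> complex" assume x: "x \<in> dual" and y: "y \<in> dual"
    have ix: "i x \<in> dual" and iy: "i y \<in> dual" using idual x y by auto
    show "(\<Sum>a\<in>UNIV. i x a * i y a * p a) * (\<Sum>b\<in>UNIV. ?B x b * i y b * q b) * (\<Sum>c\<in>UNIV. ?B y c * r c) =
      ?m^3 * (if (\<forall>a. i x a * i y a * p a = 1) \<and>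
        (\<forall>a. ?B x a * i y a * q a = 1) \<and> (\<forall>a. ?B y a * r a = 1) then 1 else 0)"
      unfolding orth3[OF ix iy p] orth3[OF Bd[OF x] iy q] orth2[OF Bd[OF y] r] by (rule prod_ifs)
  qed
  also have "\<dots> = ?m^3 * (\<Sum>x\<in>dual. \<Sum>y\<in>dual. if (\<forall>a. i x a * i y a * p a = 1) \<and>
        (\<forall>a. ?B x a * i y a * q a = 1) \<and> (\<forall>a. ?B y a * r a = 1) then 1 else 0)"
    by (simp add: sum_distrib_left)
  finally show ?thesis .
qed

lemma PhiR:
  fixes p :: "'a::{ab_group_add,finite} \<Rightarrow> complex"
  assumes idual: "\<forall>x\<in>dual. i x \<in> dual" and p: "p \<in> dual" and q: "q \<in> dual" and r: "r \<in> dual"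
  shows "(\<Sum>a\<in>UNIV. \<Sum>b\<in>UNIV. \<Sum>c\<in>UNIV. PP i a (b+c) * PP i b c * p a * q b * r c) =
    (of_nat (card (UNIV :: 'a set)))^3 * (\<Sum>x\<in>dual. \<Sum>y\<in>dual. if (\<forall>a. i x a * p a = 1) \<and>
        (\<forall>a. char_mult (i x) (char_inv x) a * i y a * q a = 1) \<and>
        (\<forall>a. char_mult (i x) (char_inv x) a * char_mult (i y) (char_inv y) a * r a = 1) then 1 else 0)"
proof -
  let ?m = "of_nat (card (UNIV :: 'a set)) :: complex"
  let ?B = "\<lambda>x. char_mult (i x) (char_inv x)"
  have Bd: "?B x \<in> dual" if "x \<in> dual" for x using that idual by (simp add: mult_dual inv_dual)
  have "(\<Sum>a\<in>UNIV. \<Sum>b\<in>UNIV. \<Sum>c\<in>UNIV. PP i a (b+c) * PP i b c * p a * q b * r c) =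
     (\<Sum>a\<in>UNIV. \<Sum>b\<in>UNIV. \<Sum>c\<in>UNIV. \<Sum>x\<in>dual. \<Sum>y\<in>dual.
        (i x a * p a) * (?B x b * i y b * q b) * (?B x c * ?B y c * r c))"
  proof (intro sum.cong refl)
    fix a b c
    have "PP i a (b+c) * PP i b c * p a * q b * r c =
       (\<Sum>x\<in>dual. \<Sum>y\<in>dual. (i x a * ?B x (b+c)) * (i y b * ?B y c) * (p a * q b * r c))"
    proof -
      have "PP i a (b+c) * PP i b c * p a * q b * r c = PP i a (b+c) * PP i b c * (p a * q b * r c)"
        by (simp only: mult.assoc)
      also have "\<dots> = (\<Sum>x\<in>dual. \<Sum>y\<in>dual. (i x a * ?B x (b+c)) * (i y b * ?B y c) * (p a * q b * r c))"
        unfolding PP_def by (rule sumprod_w)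
      finally show ?thesis .
    qed
    also have "\<dots> = (\<Sum>x\<in>dual. \<Sum>y\<in>dual. (i x a * p a) * (?B x b * i y b * q b) * (?B x c * ?B y c * r c))"
    proof (intro sum.cong refl)
      fix x y :: "'a \<Rightarrow> complex" assume "x \<in> dual"
      hence "?B x \<in> dual" by (rule Bd)
      thus "(i x a * ?B x (b+c)) * (i y b * ?B y c) * (p a * q b * r c) =
        (i x a * p a) * (?B x b * i y b * q b) * (?B x c * ?B y c * r c)"
        using dual_add[of "?B x" b c] by (simp only: mult_ac)
    qed
    finally show "PP i a (b+c) * PP i b c * p a * q b * r c =
       (\<Sum>x\<in>dual. \<Sum>y\<in>dual. (i x a * p a) * (?B x b * i y b * q b) * (?B x c * ?B y c * r c))" .
  qed
  also have "\<dots> = (\<Sum>x\<in>dual. \<Sum>y\<in>dual. (\<Sum>a\<in>UNIV. i x a * p a) * (\<Sum>b\<in>UNIV. ?B x b * i y b * q b)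
       * (\<Sum>c\<in>UNIV. ?B x c * ?B y c * r c))"
    by (rule sum5)
  also have "\<dots> = (\<Sum>x\<in>dual. \<Sum>y\<in>dual. ?m^3 * (if (\<forall>a. i x a * p a = 1) \<and>
        (\<forall>a. ?B x a * i y a * q a = 1) \<and> (\<forall>a. ?B x a * ?B y a * r a = 1) then 1 else 0))"
  proof (intro sum.cong refl)
    fix x y :: "'a \<Rightarrow> complex" assume x: "x \<in> dual" and y: "y \<in> dual"
    have ix: "i x \<in> dual" and iy: "i y \<in> dual" using idual x y by auto
    show "(\<Sum>a\<in>UNIV. i x a * p a) * (\<Sum>b\<in>UNIV. ?B x b * i y b * q b) * (\<Sum>c\<in>UNIV. ?B x c * ?B y c * r c) =
      ?m^3 * (if (\<forall>a. i x a * p a = 1) \<and>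
        (\<forall>a. ?B x a * i y a * q a = 1) \<and> (\<forall>a. ?B x a * ?B y a * r a = 1) then 1 else 0)"
      unfolding orth2[OF ix p] orth3[OF Bd[OF x] iy q] orth3[OF Bd[OF x] Bd[OF y] r] by (rule prod_ifs)
  qed
  also have "\<dots> = ?m^3 * (\<Sum>x\<in>dual. \<Sum>y\<in>dual. if (\<forall>a. i x a * p a = 1) \<and>
        (\<forall>a. ?B x a * i y a * q a = 1) \<and> (\<forall>a. ?B x a * ?B y a * r a = 1) then 1 else 0)"
    by (simp add: sum_distrib_left)
  finally show ?thesis .
qed

lemma PhiE:
  fixes p :: "'a::{ab_group_add,finite} \<Rightarrow> complex"
  assumes p: "p \<in> dual" and q: "q \<in> dual" and r: "r \<in> dual"
  defines "m \<equiv> of_nat (card (UNIV :: 'a set)) :: complex"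
  shows "(\<Sum>a\<in>UNIV. \<Sum>b\<in>UNIV. \<Sum>c\<in>UNIV. (kdelta(a+b)*DD a) * p a * q b * r c) = m * (\<Sum>c\<in>UNIV. r c)"
    and "(\<Sum>a\<in>UNIV. \<Sum>b\<in>UNIV. \<Sum>c\<in>UNIV. (kdelta a*kdelta b) * p a * q b * r c) = (\<Sum>c\<in>UNIV. r c)"
    and "(\<Sum>a\<in>UNIV. \<Sum>b\<in>UNIV. \<Sum>c\<in>UNIV. (kdelta(b+c)*DD b) * p a * q b * r c) = (\<Sum>a\<in>UNIV. p a) * m"
    and "(\<Sum>a\<in>UNIV. \<Sum>b\<in>UNIV. \<Sum>c\<in>UNIV. (kdelta b*kdelta c) * p a * q b * r c) = (\<Sum>a\<in>UNIV. p a)"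
proof -
  let ?Sr = "\<Sum>c\<in>UNIV. r c"
  let ?Sp = "\<Sum>a\<in>UNIV. p a"
  have "(\<Sum>a\<in>UNIV. \<Sum>b\<in>UNIV. \<Sum>c\<in>UNIV. (kdelta(a+b)*DD a) * p a * q b * r c) =
     (\<Sum>a\<in>UNIV. \<Sum>b\<in>UNIV. kdelta(a+b) * (DD a * p a * q b * ?Sr))"
    by (simp add: sum_distrib_left mult_ac)
  also have "\<dots> = (\<Sum>a\<in>UNIV. DD a * p a * q (-a) * ?Sr)"
    by (simp only: kd_sum1)
  also have "\<dots> = (\<Sum>a\<in>UNIV. DD a * p a * q (-a)) * ?Sr"
    by (simp only: sum_distrib_right)
  finally show "(\<Sum>a\<in>UNIV. \<Sum>b\<in>UNIV. \<Sum>c\<in>UNIV. (kdelta(a+b)*DD a) * p a * q b * r c) = m * ?Sr"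
    using Dsum[OF p q] by (simp add: m_def)
  have "(\<Sum>a\<in>UNIV. \<Sum>b\<in>UNIV. \<Sum>c\<in>UNIV. (kdelta a*kdelta b) * p a * q b * r c) =
     (\<Sum>a\<in>UNIV. kdelta a * (\<Sum>b\<in>UNIV. kdelta b * (p a * q b * ?Sr)))"
    by (simp add: sum_distrib_left mult_ac)
  also have "\<dots> = p 0 * q 0 * ?Sr" by (simp only: kd_sum0)
  finally show "(\<Sum>a\<in>UNIV. \<Sum>b\<in>UNIV. \<Sum>c\<in>UNIV. (kdelta a*kdelta b) * p a * q b * r c) = ?Sr"
    using dual_0[OF p] dual_0[OF q] by simp
  have "(\<Sum>a\<in>UNIV. \<Sum>b\<in>UNIV. \<Sum>c\<in>UNIV. (kdelta(b+c)*DD b) * p a * q b * r c) =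
     (\<Sum>a\<in>UNIV. p a * (\<Sum>b\<in>UNIV. \<Sum>c\<in>UNIV. kdelta(b+c) * (DD b * q b * r c)))"
    by (simp add: sum_distrib_left mult_ac)
  also have "\<dots> = (\<Sum>a\<in>UNIV. p a * (\<Sum>b\<in>UNIV. DD b * q b * r (-b)))"
    by (simp only: kd_sum1)
  also have "\<dots> = ?Sp * m"
    using Dsum[OF q r] by (simp add: m_def sum_distrib_right)
  finally show "(\<Sum>a\<in>UNIV. \<Sum>b\<in>UNIV. \<Sum>c\<in>UNIV. (kdelta(b+c)*DD b) * p a * q b * r c) = ?Sp * m" .
  have "(\<Sum>a\<in>UNIV. \<Sum>b\<in>UNIV. \<Sum>c\<in>UNIV. (kdelta b*kdelta c) * p a * q b * r c) =
     (\<Sum>a\<in>UNIV. p a * (\<Sum>b\<in>UNIV. kdelta b * (\<Sum>c\<in>UNIV. kdelta c * (q b * r c))))"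
    by (simp add: sum_distrib_left mult_ac)
  also have "\<dots> = (\<Sum>a\<in>UNIV. p a * (q 0 * r 0))" by (simp only: kd_sum0)
  finally show "(\<Sum>a\<in>UNIV. \<Sum>b\<in>UNIV. \<Sum>c\<in>UNIV. (kdelta b*kdelta c) * p a * q b * r c) = ?Sp"
    using dual_0[OF q] dual_0[OF r] by simp
qed

lemma count_eq:
  fixes J :: "'a::{ab_group_add,finite} \<Rightarrow> 'a \<Rightarrow> complex"
  assumes idual: "\<forall>x\<in>dual. i x \<in> dual"
    and Jdef: "\<forall>a b. J a b = (1 / of_nat (card (UNIV :: 'a set))) *
            (\<Sum>x\<in>dual. i x a * char_mult (i x) (char_inv x) b)"
    and JB: "\<forall>a b c. Jstar J a b * Jstar J (a + b) c = Jstar J a (b + c) * Jstar J b c"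
    and p: "p \<in> dual" and q: "q \<in> dual" and r: "r \<in> dual"
  shows "(\<Sum>x\<in>dual. \<Sum>y\<in>dual. if (\<forall>a. i x a * i y a * p a = 1) \<and>
        (\<forall>a. char_mult (i x) (char_inv x) a * i y a * q a = 1) \<and>
        (\<forall>a. char_mult (i y) (char_inv y) a * r a = 1) then 1 else 0) =
   (\<Sum>x\<in>dual. \<Sum>y\<in>dual. if (\<forall>a. i x a * p a = 1) \<and>
        (\<forall>a. char_mult (i x) (char_inv x) a * i y a * q a = 1) \<and>
        (\<forall>a. char_mult (i x) (char_inv x) a * char_mult (i y) (char_inv y) a * r a = 1) then 1 else (0::complex))"
    (is "?CL = ?CR")
proof -
  define m where "m = (of_nat (card (UNIV :: 'a set)) :: complex)"
  have m0: "m \<noteq> 0" unfolding m_def by simp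
  have pw': "PP i a b * PP i (a+b) c * p a * q b * r c - PP i a (b+c) * PP i b c * p a * q b * r c
     - m * ((kdelta(a+b)*DD a) * p a * q b * r c) + m*m*((kdelta a*kdelta b) * p a * q b * r c)
     + m*((kdelta(b+c)*DD b) * p a * q b * r c) - m*m*((kdelta b*kdelta c) * p a * q b * r c) = 0" for a b c
  proof -
    have "PP i a b * PP i (a+b) c - PP i a (b+c) * PP i b c +
     (- m*(kdelta(a+b)*DD a) + m*m*(kdelta a*kdelta b) + m*(kdelta(b+c)*DD b) - m*m*(kdelta b*kdelta c)) = 0"
      unfolding m_def by (rule pw[OF idual Jdef JB])
    hence "(PP i a b * PP i (a+b) c - PP i a (b+c) * PP i b c +
     (- m*(kdelta(a+b)*DD a) + m*m*(kdelta a*kdelta b) + m*(kdelta(b+c)*DD b) - m*m*(kdelta b*kdelta c)))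
      * (p a * q b * r c) = 0" by simp
    thus ?thesis by (simp add: algebra_simps)
  qed
  have "(\<Sum>a\<in>UNIV. \<Sum>b\<in>UNIV. \<Sum>c\<in>UNIV. PP i a b * PP i (a+b) c * p a * q b * r c - PP i a (b+c) * PP i b c * p a * q b * r c
     - m * ((kdelta(a+b)*DD a) * p a * q b * r c) + m*m*((kdelta a*kdelta b) * p a * q b * r c)
     + m*((kdelta(b+c)*DD b) * p a * q b * r c) - m*m*((kdelta b*kdelta c) * p a * q b * r c)) = 0"
    by (simp only: pw' sum.neutral_const)
  hence "(\<Sum>a\<in>UNIV. \<Sum>b\<in>UNIV. \<Sum>c\<in>UNIV. PP i a b * PP i (a+b) c * p a * q b * r c)
     - (\<Sum>a\<in>UNIV. \<Sum>b\<in>UNIV. \<Sum>c\<in>UNIV. PP i a (b+c) * PP i b c * p a * q b * r c)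
     - m * (\<Sum>a\<in>UNIV. \<Sum>b\<in>UNIV. \<Sum>c\<in>UNIV. (kdelta(a+b)*DD a) * p a * q b * r c)
     + m*m*(\<Sum>a\<in>UNIV. \<Sum>b\<in>UNIV. \<Sum>c\<in>UNIV. (kdelta a*kdelta b) * p a * q b * r c)
     + m*(\<Sum>a\<in>UNIV. \<Sum>b\<in>UNIV. \<Sum>c\<in>UNIV. (kdelta(b+c)*DD b) * p a * q b * r c)
     - m*m*(\<Sum>a\<in>UNIV. \<Sum>b\<in>UNIV. \<Sum>c\<in>UNIV. (kdelta b*kdelta c) * p a * q b * r c) = 0"
    by (simp only: sum.distrib sum_subtractf sum_distrib_left[symmetric])
  hence "m^3 * ?CL - m^3 * ?CR = 0"
    unfolding PhiL[OF idual p q r] PhiR[OF idual p q r] PhiE[OF p q r] m_def[symmetric]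
    by (simp add: algebra_simps)
  thus ?thesis using m0 by simp
qed

lemma exists_from_count:
  assumes fin: "finite X"
    and eq: "(\<Sum>x\<in>X. \<Sum>y\<in>X. if P x y then 1 else 0) = (\<Sum>x\<in>X. \<Sum>y\<in>X. if Q x y then 1 else (0::complex))"
    and x0: "x0 \<in> X" and y0: "y0 \<in> X" and P0: "P x0 y0"
  shows "\<exists>x\<in>X. \<exists>y\<in>X. Q x y"
proof (rule ccontr)
  assume "\<not> ?thesis"
  hence "(\<Sum>x\<in>X. \<Sum>y\<in>X. if Q x y then 1 else (0::complex)) = 0" by simp
  hence Z: "of_nat (\<Sum>x\<in>X. \<Sum>y\<in>X. if P x y then 1 else 0 :: nat) = (0::complex)"
  proof -
    have "of_nat (\<Sum>x\<in>X. \<Sum>y\<in>X. if P x y then 1 else 0 :: nat) = (\<Sum>x\<in>X. \<Sum>y\<in>X. if P x y then 1 else (0::complex))"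
      unfolding of_nat_sum by (intro sum.cong refl) simp
    thus ?thesis using eq \<open>(\<Sum>x\<in>X. \<Sum>y\<in>X. if Q x y then 1 else (0::complex)) = 0\<close> by simp
  qed
  have "1 \<le> (\<Sum>y\<in>X. if P x0 y then 1 else 0 :: nat)"
    using member_le_sum[of y0 X "\<lambda>y. if P x0 y then 1 else 0 :: nat"] fin y0 P0 by simp
  also have "\<dots> \<le> (\<Sum>x\<in>X. \<Sum>y\<in>X. if P x y then 1 else 0 :: nat)"
    using member_le_sum[of x0 X "\<lambda>x. \<Sum>y\<in>X. if P x y then 1 else 0 :: nat"] fin x0 by simp
  finally have "(\<Sum>x\<in>X. \<Sum>y\<in>X. if P x y then 1 else 0 :: nat) \<noteq> 0" by linarith
  thus False using Z by (simp only: of_nat_eq_0_iff)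
qed

lemma alg1: "(bx::complex) \<noteq> 0 \<Longrightarrow> iy \<noteq> 0 \<Longrightarrow> yv \<noteq> 0 \<Longrightarrow> q \<noteq> 0 \<Longrightarrow> bx * iy * q = 1 \<Longrightarrow>
   bx * (iy * inverse yv) * r = 1 \<Longrightarrow> yv = r / q"
proof -
  assume a: "bx \<noteq> 0" "iy \<noteq> 0" "yv \<noteq> 0" "q \<noteq> 0" "bx * iy * q = 1" "bx * (iy * inverse yv) * r = 1"
  have "bx * iy * q = bx * iy * (r * inverse yv)" using a(5,6) by (simp add: mult_ac)
  hence "q = r * inverse yv" using a(1,2) by simp
  thus ?thesis using a(3,4) by (simp add: field_simps)
qed

theorem mainTheorem17:
  fixes J :: "'a::{ab_group_add,finite} \<Rightarrow> 'a \<Rightarrow> complex"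
    and i :: "('a \<Rightarrow> complex) \<Rightarrow> ('a \<Rightarrow> complex)"
  assumes "jacobi_function J"
    and "bij_betw i dual dual"
    and "\<forall>x\<in>dual. i x = char_mult x (i (char_inv x))"
    and "\<forall>a b. J a b = (1 / of_nat (card (UNIV :: 'a set))) *
            (\<Sum>x\<in>dual. i x a * char_mult (i x) (char_inv x) b)"
  shows "\<forall>x\<in>dual. \<forall>y\<in>dual. \<forall>z\<in>dual.
           oplus_char i (oplus_char i x y) z = oplus_char i x (oplus_char i y z)"
proof (intro ballI)
  fix x y z :: "'a \<Rightarrow> complex"
  assume x: "x \<in> dual" and y: "y \<in> dual" and z: "z \<in> dual"
  have idual: "\<forall>t\<in>dual. i t \<in> dual" using assms(2) by (auto simp: bij_betw_def)
  have JB: "\<forall>a b c. Jstar J a b * Jstar J (a + b) c = Jstar J a (b + c) * Jstar J b c"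
    using assms(1) unfolding jacobi_function_def by blast
  note nz = dual_nz
  define X where "X = char_div x y"
  define w where "w = oplus_char i x y"
  define Y where "Y = char_div w z"
  define s where "s = oplus_char i w z"
  have Xd: "X \<in> dual" unfolding X_def using x y by (rule div_dual)
  have iXd: "i X \<in> dual" using idual Xd by auto
  have wd: "w \<in> dual" unfolding w_def oplus_char_def X_def[symmetric] using x iXd by (simp add: mult_dual inv_dual)
  have Yd: "Y \<in> dual" unfolding Y_def using wd z by (rule div_dual)
  have iYd: "i Y \<in> dual" using idual Yd by auto
  have sd: "s \<in> dual" unfolding s_def oplus_char_def Y_def[symmetric] using wd iYd by (simp add: mult_dual inv_dual)
  have Xv: "X a = x a / y a" for a by (simp add: X_def char_div_def)
  have Yv: "Y a = w a / z a" for a by (simp add: Y_def char_div_def)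
  have wv: "w a = x a / i X a" for a
    by (simp add: w_def oplus_char_def X_def[symmetric] char_mult_def char_inv_def divide_inverse)
  have sv: "s a = w a / i Y a" for a
    by (simp add: s_def oplus_char_def Y_def[symmetric] char_mult_def char_inv_def divide_inverse)
  define p where "p = char_div s x"
  define q where "q = char_div s y"
  define r where "r = char_div s z"
  have pd: "p \<in> dual" unfolding p_def using sd x by (rule div_dual)
  have qd: "q \<in> dual" unfolding q_def using sd y by (rule div_dual)
  have rd: "r \<in> dual" unfolding r_def using sd z by (rule div_dual)
  have pv: "p a = s a / x a" for a by (simp add: p_def char_div_def)
  have qv: "q a = s a / y a" for a by (simp add: q_def char_div_def)
  have rv: "r a = s a / z a" for a by (simp add: r_def char_div_def)
  have condL: "(\<forall>a. i X a * i Y a * p a = 1) \<and>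
        (\<forall>a. char_mult (i X) (char_inv X) a * i Y a * q a = 1) \<and>
        (\<forall>a. char_mult (i Y) (char_inv Y) a * r a = 1)"
  proof (intro conjI allI)
    fix a
    have n: "x a \<noteq> 0" "y a \<noteq> 0" "z a \<noteq> 0" "i X a \<noteq> 0" "i Y a \<noteq> 0" "w a \<noteq> 0"
      using nz[OF x] nz[OF y] nz[OF z] nz[OF iXd] nz[OF iYd] nz[OF wd] by auto
    show "i X a * i Y a * p a = 1" unfolding pv sv wv using n by (simp add: field_simps)
    show "char_mult (i X) (char_inv X) a * i Y a * q a = 1"
      unfolding qv sv wv char_mult_def char_inv_def Xv[of a] using n by (simp add: field_simps)
    show "char_mult (i Y) (char_inv Y) a * r a = 1"
      unfolding rv sv char_mult_def char_inv_def Yv[of a] using n by (simp add: field_simps)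
  qed
  note ceq = count_eq[OF idual assms(4) JB pd qd rd]
  note ex = exists_from_count[OF finite_dual ceq]
  have "\<exists>x'\<in>dual. \<exists>y'\<in>dual. (\<forall>a. i x' a * p a = 1) \<and>
    (\<forall>a. char_mult (i x') (char_inv x') a * i y' a * q a = 1) \<and>
    (\<forall>a. char_mult (i x') (char_inv x') a * char_mult (i y') (char_inv y') a * r a = 1)"
    by (rule ex[OF Xd Yd condL])
  then obtain x' where x'd: "x' \<in> dual" and ex1: "\<exists>y'\<in>dual. (\<forall>a. i x' a * p a = 1) \<and>
    (\<forall>a. char_mult (i x') (char_inv x') a * i y' a * q a = 1) \<and>
    (\<forall>a. char_mult (i x') (char_inv x') a * char_mult (i y') (char_inv y') a * r a = 1)" ..
  from ex1 obtain y' where y'd: "y' \<in> dual" and cc: "(\<forall>a. i x' a * p a = 1) \<and>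
    (\<forall>a. char_mult (i x') (char_inv x') a * i y' a * q a = 1) \<and>
    (\<forall>a. char_mult (i x') (char_inv x') a * char_mult (i y') (char_inv y') a * r a = 1)" ..
  note e1 = conjunct1[OF cc] and e2 = conjunct1[OF conjunct2[OF cc]] and e3 = conjunct2[OF conjunct2[OF cc]]
  have ix'd: "i x' \<in> dual" and iy'd: "i y' \<in> dual" using idual x'd y'd by auto
  have y'eq: "y' = char_div y z"
  proof
    fix a
    have n: "x a \<noteq> 0" "y a \<noteq> 0" "z a \<noteq> 0" "s a \<noteq> 0" "x' a \<noteq> 0" "y' a \<noteq> 0" "i x' a \<noteq> 0" "i y' a \<noteq> 0"
      using nz[OF x] nz[OF y] nz[OF z] nz[OF sd] nz[OF x'd] nz[OF y'd] nz[OF ix'd] nz[OF iy'd] by auto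
    have "y' a = r a / q a"
      apply (rule alg1[of "i x' a * inverse (x' a)" "i y' a"])
      using n e2 e3 by (simp_all add: char_mult_def char_inv_def qv)
    thus "y' a = char_div y z a" using n by (simp add: rv qv char_div_def field_simps)
  qed
  define w' where "w' = oplus_char i y z"
  have w'v: "w' a = y a / i y' a" for a
    by (simp add: w'_def oplus_char_def y'eq[symmetric] char_mult_def char_inv_def divide_inverse)
  have x'eq: "x' = char_div x w'"
  proof
    fix a
    have n: "x a \<noteq> 0" "y a \<noteq> 0" "z a \<noteq> 0" "s a \<noteq> 0" "x' a \<noteq> 0" "y' a \<noteq> 0" "i x' a \<noteq> 0" "i y' a \<noteq> 0"
      using nz[OF x] nz[OF y] nz[OF z] nz[OF sd] nz[OF x'd] nz[OF y'd] nz[OF ix'd] nz[OF iy'd] by auto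
    have ix': "i x' a = x a / s a" using e1[rule_format, of a] n unfolding pv by (simp add: field_simps)
    have "i x' a * inverse (x' a) * i y' a * (s a / y a) = 1"
      using e2[rule_format, of a] unfolding qv char_mult_def char_inv_def .
    hence "x a * i y' a = x' a * y a" unfolding ix' using n by (simp add: field_simps)
    thus "x' a = char_div x w' a" unfolding char_div_def w'v using n by (simp add: field_simps)
  qed
  show "oplus_char i (oplus_char i x y) z = oplus_char i x (oplus_char i y z)"
    unfolding w_def[symmetric] s_def[symmetric] w'_def[symmetric]
  proof
    fix a
    have n: "x a \<noteq> 0" "s a \<noteq> 0" using nz[OF x] nz[OF sd] by auto
    have ix': "i x' a = x a / s a" using e1[rule_format, of a] n unfolding pv by (simp add: field_simps)
    show "s a = oplus_char i x w' a"
      unfolding oplus_char_def x'eq[symmetric] char_mult_def char_inv_def ix' using n by (simp add: field_simps)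
  qed
qed

end
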